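(* Let $K\ge 2$, let $L_1,\dots,L_K:\mathbb{R}^d\to\mathbb{R}$ be twice differentiable and convex, and let $\mu>0$, $\rho,\delta\ge 0$. Assume every $L_k$ is $\mu$-smooth and $\rho$-Hessian Lipschitz. Let $\widehat{w}_1,\dots,\widehat{w}_{K-1}\in\mathbb{R}^d$ and let $H_1,\dots,H_{K-1}$ be symmetric positive semidefinite $d\times d$ matrices with $\|H_k\|_2\le\mu$ and $\|H_k-\nabla^2L_k(\widehat{w}_k)\|_2\le\delta$ for all $k\in[K-1]$. Define \[ \widetilde{L}_{K-1}(w)=\sum_{k=1}^{K-1}\Big(L_k(\widehat{w}_k)+(w-\widehat{w}_k)^\top\nabla L_k(\widehat{w}_k)+\tfrac12(w-\widehat{w}_k)^\top H_k(w-\widehat{w}_k)\Big), \] $\widetilde{F}(w)=\frac1K\big(\widetilde{L}_{K-1}(w)+L_K(w)\big)$ and $F(w)=\frac1K\sum_{k=1}^K L_k(w)$. Let $\mathcal{W}\subseteq\mathbb{R}^d$, let $F^*=\min_{w\in\mathcal{W}}F(w)$, $w^*\in\arg\min_{w\in\mathcal{W}}F(w)$, $\widetilde{w}^*\in\arg\min_{w\in\mathcal{W}}\widetilde{F}(w)$ (assumed to exist). Let $w_0=\widehat{w}_{K-1}$, $\widetilde{D}=\|w_0-\widetilde{w}^*\|_2$, and run $T$ iterations of $w_t=w_{t-1}-\eta\nabla\widetilde{F}(w_{t-1})$ with $\eta=1/\mu$, the iterates lying in $\mathcal{W}$. Then \[ F(w_T)-F^*\le\frac{\alpha}{T}+\beta,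 \] where $\alpha=2\mu\widetilde{D}^2$ and \[ \beta=\frac{1}{2K}\sum_{k=1}^{K-1}\Big[\delta\big(\|w^*-\widehat{w}_k\|_2^2+2\widetilde{D}^2+2\|\widetilde{w}^*-\widehat{w}_k\|_2^2\big)+\rho\big(\|w^*-\widehat{w}_k\|_2^3+4\widetilde{D}^3+4\|\widetilde{w}^*-\widehat{w}_k\|_2^3\big)\Big]. \]
   Context: $\|\cdot\|_2$ denotes the Euclidean norm for vectors and the operator norm for matrices; $[N]=\{1,\dots,N\}$. A differentiable $f$ is $\mu$-smooth if $\|\nabla f(w)-\nabla f(w')\|_2\le\mu\|w-w'\|_2$ for all $w,w'$, and $\rho$-Hessian Lipschitz if $\|\nabla^2 f(w)-\nabla^2 f(w')\|_2\le\rho\|w-w'\|_2$ for all $w,w'$. *)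

theory Defs
  imports "HOL-Analysis.Analysis"
begin

definition Ltil :: "nat \<Rightarrow> (nat \<Rightarrow> real^'n \<Rightarrow> real) \<Rightarrow> (nat \<Rightarrow> real^'n \<Rightarrow> real^'n)
    \<Rightarrow> (nat \<Rightarrow> real^'n) \<Rightarrow> (nat \<Rightarrow> real^'n^'n) \<Rightarrow> real^'n \<Rightarrow> real" where
  "Ltil K L G wh H w =
     (\<Sum>k=1..K-1. L k (wh k) + (w - wh k) \<bullet> G k (wh k)
                  + (1/2) * ((w - wh k) \<bullet> (H k *v (w - wh k))))"

definition Ftil :: "nat \<Rightarrow> (nat \<Rightarrow> real^'n \<Rightarrow> real) \<Rightarrow> (nat \<Rightarrow> real^'n \<Rightarrow> real^'n)
    \<Rightarrow> (nat \<Rightarrow> real^'n) \<Rightarrow> (nat \<Rightarrow> real^'n^'n) \<Rightarrow> real^'n \<Rightarrow> real" where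
  "Ftil K L G wh H w = (1 / real K) * (Ltil K L G wh H w + L K w)"

definition Fobj :: "nat \<Rightarrow> (nat \<Rightarrow> real^'n \<Rightarrow> real) \<Rightarrow> real^'n \<Rightarrow> real" where
  "Fobj K L w = (1 / real K) * (\<Sum>k=1..K. L k w)"

end

theory Submission
  imports Defs
begin


lemma deriv_bound_mono:
  fixes f f' B b :: "real \<Rightarrow> real" and s :: real
  assumes s: "s \<ge> 0"
    and d: "\<And>t. 0 \<le> t \<Longrightarrow> t \<le> s \<Longrightarrow> (f has_real_derivative f' t) (at t)"
    and dB: "\<And>t. 0 \<le> t \<Longrightarrow> t \<le> s \<Longrightarrow> (B has_real_derivative b t) (at t)"
    and bd: "\<And>t. 0 \<le> t \<Longrightarrow> t \<le> s \<Longrightarrow> f' t \<le> b t"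
  shows "f s - f 0 \<le> B s - B 0"
proof (cases "s = 0")
  case True then show ?thesis by simp
next
  case False
  hence sp: "0 < s" using s by simp
  define g where "g t = f t - B t" for t
  have dg: "(g has_real_derivative (f' t - b t)) (at t)" if "0 \<le> t" "t \<le> s" for t
    unfolding g_def using d[OF that] dB[OF that]
    by (auto intro!: derivative_eq_intros)
  from MVT2[OF sp dg] obtain z where z: "0 < z" "z < s" "g s - g 0 = (s - 0) * (f' z - b z)"
    by auto
  have "f' z - b z \<le> 0" using bd[of z] z by simp
  hence "g s - g 0 \<le> 0" using z sp by (simp add: mult_nonneg_nonpos)
  thus ?thesis unfolding g_def by simp
qed

lemma line_deriv:
  fixes L :: "'a::real_inner \<Rightarrow> real"
  assumes "\<And>x. (L has_derivative (\<lambda>h. G x \<bullet> h)) (at x)"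
  shows "((\<lambda>t. L (a + t *\<^sub>R v)) has_real_derivative (G (a + t *\<^sub>R v) \<bullet> v)) (at t)"
proof -
  have l: "((\<lambda>t. a + t *\<^sub>R v) has_derivative (\<lambda>s. s *\<^sub>R v)) (at t)"
    by (auto intro!: derivative_eq_intros)
  have "((\<lambda>t. L (a + t *\<^sub>R v)) has_derivative (\<lambda>s. G (a + t *\<^sub>R v) \<bullet> (s *\<^sub>R v))) (at t)"
    using has_derivative_compose[OF l assms] by (simp add: o_def)
  moreover have "(\<lambda>s. s * c) = (\<lambda>s. c * s)" for c::real by (simp add: mult.commute)
  ultimately show ?thesis unfolding has_field_derivative_def by simp
qed

lemma line_deriv_vec:
  fixes G :: "real^'n \<Rightarrow> real^'n"
  assumes "\<And>x. (G has_derivative (\<lambda>h. Hs x *v h)) (at x)"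
  shows "((\<lambda>t. G (a + t *\<^sub>R v) \<bullet> v) has_real_derivative (v \<bullet> (Hs (a + t *\<^sub>R v) *v v))) (at t)"
proof -
  have l: "((\<lambda>t. a + t *\<^sub>R v) has_derivative (\<lambda>s. s *\<^sub>R v)) (at t)"
    by (auto intro!: derivative_eq_intros)
  have "((\<lambda>t. G (a + t *\<^sub>R v)) has_derivative (\<lambda>s. Hs (a + t *\<^sub>R v) *v (s *\<^sub>R v))) (at t)"
    using has_derivative_compose[OF l assms] by (simp add: o_def)
  hence "((\<lambda>t. G (a + t *\<^sub>R v) \<bullet> v) has_derivative (\<lambda>s. (Hs (a + t *\<^sub>R v) *v (s *\<^sub>R v)) \<bullet> v)) (at t)"
    by (auto intro!: derivative_eq_intros)
  moreover have "(\<lambda>s. s * c) = (\<lambda>s. c * s)" for c::real by (simp add: mult.commute)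
  ultimately show ?thesis unfolding has_field_derivative_def
    by (simp add: matrix_vector_mult_scaleR inner_commute)
qed

lemma quad_bound:
  fixes A :: "real^'n^'n"
  shows "\<bar>v \<bullet> (A *v v)\<bar> \<le> onorm (\<lambda>u. A *v u) * (norm v)^2"
proof -
  have "\<bar>v \<bullet> (A *v v)\<bar> \<le> norm v * norm (A *v v)" by (rule Cauchy_Schwarz_ineq2)
  also have "\<dots> \<le> norm v * (onorm (\<lambda>u. A *v u) * norm v)"
    by (intro mult_left_mono onorm) auto
  finally show ?thesis by (simp add: power2_eq_square algebra_simps)
qed

lemma taylor3:
  fixes L :: "real^'n \<Rightarrow> real" and G :: "real^'n \<Rightarrow> real^'n"
  assumes grad: "\<And>x. (L has_derivative (\<lambda>h. G x \<bullet> h)) (at x)"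
    and hess: "\<And>x. (G has_derivative (\<lambda>h. Hs x *v h)) (at x)"
    and lip: "\<And>x y. onorm (\<lambda>v. (Hs x - Hs y) *v v) \<le> \<rho> * norm (x - y)"
  shows "\<bar>L (a + v) - L a - G a \<bullet> v - 1/2 * (v \<bullet> (Hs a *v v))\<bar> \<le> \<rho> / 6 * norm v ^ 3"
proof -
  define r where "r = norm v"
  define c where "c = v \<bullet> (Hs a *v v)"
  define p where "p t = G (a + t *\<^sub>R v) \<bullet> v - G a \<bullet> v - t * c" for t
  define q where "q t = v \<bullet> (Hs (a + t *\<^sub>R v) *v v) - c" for t
  define psi where "psi t = L (a + t *\<^sub>R v) - L a - t * (G a \<bullet> v) - t^2 / 2 * c" for t
  have dp: "(p has_real_derivative q t) (at t)" for t
    unfolding p_def q_def using line_deriv_vec[OF hess, of a v t]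
    by (auto intro!: derivative_eq_intros)
  have dpsi: "(psi has_real_derivative p t) (at t)" for t
    unfolding p_def psi_def using line_deriv[OF grad, of a v t]
    by (auto intro!: derivative_eq_intros)
  have qb: "\<bar>q t\<bar> \<le> \<rho> * r^3 * t" if "0 \<le> t" for t
  proof -
    have "q t = v \<bullet> ((Hs (a + t *\<^sub>R v) - Hs a) *v v)"
      unfolding q_def c_def by (simp add: matrix_vector_mult_diff_rdistrib inner_diff_right)
    hence "\<bar>q t\<bar> \<le> onorm (\<lambda>u. (Hs (a + t *\<^sub>R v) - Hs a) *v u) * r^2"
      using quad_bound r_def by simp
    also have "\<dots> \<le> (\<rho> * norm (t *\<^sub>R v)) * r^2"
      using lip[of "a + t *\<^sub>R v" a] by (intro mult_right_mono) auto
    also have "\<dots> = \<rho> * r^3 * t" using that r_def by (simp add: power3_eq_cube power2_eq_square)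
    finally show ?thesis .
  qed
  have p0: "p 0 = 0" unfolding p_def by simp
  have psi0: "psi 0 = 0" unfolding psi_def by simp
  have dB2: "((\<lambda>t. \<rho> * r^3 * t^2 / 2) has_real_derivative \<rho> * r^3 * t) (at t)" for t
    by (auto intro!: derivative_eq_intros)
  have dB3: "((\<lambda>t. \<rho> * r^3 * t^3 / 6) has_real_derivative \<rho> * r^3 * t^2 / 2) (at t)" for t
    by (auto intro!: derivative_eq_intros simp: power2_eq_square)
  have pb: "\<bar>p t\<bar> \<le> \<rho> * r^3 * t^2 / 2" if "0 \<le> t" for t
  proof -
    have "p t - p 0 \<le> \<rho> * r^3 * t^2 / 2 - \<rho> * r^3 * 0^2 / 2"
      by (rule deriv_bound_mono[OF that dp dB2]) (use qb in force)
    moreover have "(\<lambda>t. - p t) t - (\<lambda>t. - p t) 0 \<le> \<rho> * r^3 * t^2 / 2 - \<rho> * r^3 * 0^2 / 2"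
      by (rule deriv_bound_mono[OF that DERIV_minus[OF dp] dB2]) (use qb in force)
    ultimately show ?thesis using p0 by simp
  qed
  have "psi 1 - psi 0 \<le> \<rho> * r^3 * 1^3 / 6 - \<rho> * r^3 * 0^3 / 6"
    by (rule deriv_bound_mono[OF _ dpsi dB3]) (use pb in force)+
  moreover have "(\<lambda>t. - psi t) 1 - (\<lambda>t. - psi t) 0 \<le> \<rho> * r^3 * 1^3 / 6 - \<rho> * r^3 * 0^3 / 6"
    by (rule deriv_bound_mono[OF _ DERIV_minus[OF dpsi] dB3]) (use pb in force)+
  ultimately have "\<bar>psi 1\<bar> \<le> \<rho> * r^3 / 6" using psi0 by simp
  thus ?thesis unfolding psi_def c_def r_def by simp
qed

lemma convex_tangent:
  fixes f :: "'a::real_inner \<Rightarrow> real"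
  assumes cv: "convex_on UNIV f" and d: "(f has_derivative (\<lambda>h. g \<bullet> h)) (at x)"
  shows "f z \<ge> f x + g \<bullet> (z - x)"
proof -
  define v where "v = z - x"
  define phi where "phi t = f (x + t *\<^sub>R v)" for t
  have cphi: "convex_on UNIV phi"
  proof (rule convex_onI)
    fix t a b :: real assume t: "0 < t" "t < 1"
    have e: "x + ((1 - t) *\<^sub>R a + t *\<^sub>R b) *\<^sub>R v = (1 - t) *\<^sub>R (x + a *\<^sub>R v) + t *\<^sub>R (x + b *\<^sub>R v)"
      by (simp add: algebra_simps)
    show "phi ((1 - t) *\<^sub>R a + t *\<^sub>R b) \<le> (1 - t) * phi a + t * phi b"
      unfolding phi_def e using convex_onD[OF cv, of t] t by simp
  qed simp
  have l: "((\<lambda>t. x + t *\<^sub>R v) has_derivative (\<lambda>s. s *\<^sub>R v)) (at 0)"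
    by (auto intro!: derivative_eq_intros)
  have "(phi has_derivative (\<lambda>s. g \<bullet> (s *\<^sub>R v))) (at 0)"
  proof -
    have d': "(f has_derivative (\<lambda>h. g \<bullet> h)) (at (x + 0 *\<^sub>R v))" using d by simp
    show ?thesis using has_derivative_compose[OF l d'] unfolding phi_def by (simp add: o_def)
  qed
  moreover have "(\<lambda>s. g \<bullet> (s *\<^sub>R v)) = (\<lambda>s. (g \<bullet> v) * s)" by (simp add: mult.commute)
  ultimately have "(phi has_field_derivative (g \<bullet> v)) (at 0 within UNIV)"
    unfolding has_field_derivative_def by simp
  from convex_on_imp_above_tangent[OF cphi _ _ _ this, of 1] have "phi 1 - phi 0 \<ge> g \<bullet> v" by simp
  thus ?thesis unfolding phi_def v_def by simp
qed

lemma descent: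
  fixes f :: "'a::real_inner \<Rightarrow> real"
  assumes grad: "\<And>x. (f has_derivative (\<lambda>h. g x \<bullet> h)) (at x)"
    and sm: "\<And>x y. norm (g x - g y) \<le> \<mu> * norm (x - y)"
  shows "f y \<le> f x + g x \<bullet> (y - x) + \<mu> / 2 * norm (y - x)^2"
proof -
  define v where "v = y - x"
  define r where "r = norm v"
  define psi where "psi t = f (x + t *\<^sub>R v) - t * (g x \<bullet> v)" for t
  have dpsi: "(psi has_real_derivative (g (x + t *\<^sub>R v) \<bullet> v - g x \<bullet> v)) (at t)" for t
    unfolding psi_def using line_deriv[OF grad, of x v t]
    by (auto intro!: derivative_eq_intros)
  have dB: "((\<lambda>t. \<mu> * r^2 * t^2 / 2) has_real_derivative \<mu> * r^2 * t) (at t)" for t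
    by (auto intro!: derivative_eq_intros)
  have b: "g (x + t *\<^sub>R v) \<bullet> v - g x \<bullet> v \<le> \<mu> * r^2 * t" if "0 \<le> t" for t
  proof -
    have "g (x + t *\<^sub>R v) \<bullet> v - g x \<bullet> v = (g (x + t *\<^sub>R v) - g x) \<bullet> v"
      by (simp add: inner_diff_left)
    also have "\<dots> \<le> norm (g (x + t *\<^sub>R v) - g x) * norm v" by (rule norm_cauchy_schwarz)
    also have "\<dots> \<le> (\<mu> * norm (t *\<^sub>R v)) * norm v"
      using sm[of "x + t *\<^sub>R v" x] by (intro mult_right_mono) auto
    also have "\<dots> = \<mu> * r^2 * t" using that r_def by (simp add: power2_eq_square)
    finally show ?thesis .
  qed
  have "psi 1 - psi 0 \<le> \<mu> * r^2 * 1^2 / 2 - \<mu> * r^2 * 0^2 / 2"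
    by (rule deriv_bound_mono[OF _ dpsi dB]) (use b in force)+
  thus ?thesis unfolding psi_def v_def r_def by (simp add: algebra_simps)
qed

lemma gd_step:
  fixes f :: "'a::real_inner \<Rightarrow> real"
  assumes grad: "\<And>x. (f has_derivative (\<lambda>h. g x \<bullet> h)) (at x)"
    and sm: "\<And>x y. norm (g x - g y) \<le> \<mu> * norm (x - y)"
    and mu: "\<mu> > 0"
    and tan: "\<And>x z. f z \<ge> f x + g x \<bullet> (z - x)"
    and y: "y = x - (1 / \<mu>) *\<^sub>R g x"
  shows "f y \<le> f x" "f y - f z \<le> \<mu> / 2 * (norm (x - z)^2 - norm (y - z)^2)"
proof -
  have d: "f y \<le> f x + g x \<bullet> (y - x) + \<mu> / 2 * norm (y - x)^2" by (rule descent[OF grad sm])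
  have yx: "y - x = - (1 / \<mu>) *\<^sub>R g x" using y by simp
  have "norm (y - x)^2 = (1/\<mu>)^2 * norm (g x)^2" unfolding yx
    by (simp add: power_mult_distrib power_divide)
  hence n2: "norm (y - x)^2 = (1/\<mu>)^2 * (g x \<bullet> g x)" by (simp add: power2_norm_eq_inner)
  have i: "g x \<bullet> (y - x) = - (1/\<mu>) * (g x \<bullet> g x)" unfolding yx by simp
  have d2: "f y \<le> f x - (g x \<bullet> g x) / (2 * \<mu>)"
    using d unfolding n2 i using mu by (simp add: power2_eq_square field_simps)
  have gg: "g x \<bullet> g x \<ge> 0" by simp
  show "f y \<le> f x" using d2 gg mu by (smt (verit) divide_nonneg_pos)
  have yz: "y - z = (x - z) - (1 / \<mu>) *\<^sub>R g x" using y by simp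
  have "norm (y - z)^2 = norm (x - z)^2 - 2 / \<mu> * (g x \<bullet> (x - z)) + (1/\<mu>)^2 * (g x \<bullet> g x)"
    unfolding yz power2_norm_eq_inner
    by (simp add: inner_diff_left inner_diff_right inner_commute power2_eq_square algebra_simps)
  hence e: "\<mu> / 2 * (norm (x - z)^2 - norm (y - z)^2) = g x \<bullet> (x - z) - (g x \<bullet> g x) / (2 * \<mu>)"
    using mu by (simp add: field_simps power2_eq_square)
  have "f x \<le> f z + g x \<bullet> (x - z)" using tan[of x z]
    by (simp add: inner_diff_right)
  thus "f y - f z \<le> \<mu> / 2 * (norm (x - z)^2 - norm (y - z)^2)" unfolding e using d2 by linarith
qed

lemma aux_lin:
  fixes a p l s g :: real
  shows "a * (p + l) + a * (s + g) = a * ((p + s) + (l + g))"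
  by (simp add: algebra_simps)

lemma aux_abs:
  fixes e A B a b :: real
  shows "e = A - 1/2 * B \<Longrightarrow> \<bar>A\<bar> \<le> a \<Longrightarrow> \<bar>B\<bar> \<le> b \<Longrightarrow> \<bar>e\<bar> \<le> a + 1/2 * b"
  by (auto simp: abs_le_iff)

lemma sym_inner:
  fixes A :: "real^'n^'n"
  assumes "transpose A = A"
  shows "u \<bullet> (A *v h) = (A *v u) \<bullet> h"
proof -
  have "u \<bullet> (A *v h) = (u v* A) \<bullet> h" by (simp add: dot_lmul_matrix)
  also have "u v* A = u v* transpose A" using assms by simp
  also have "\<dots> = A *v u" by simp
  finally show ?thesis .
qed

lemma quad_deriv:
  fixes A :: "real^'n^'n"
  assumes "transpose A = A"
  shows "((\<lambda>w. c + (w - a) \<bullet> g + 1/2 * ((w - a) \<bullet> (A *v (w - a)))) has_derivative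
          (\<lambda>h. (g + A *v (x - a)) \<bullet> h)) (at x)"
proof -
  have "((\<lambda>w. c + (w - a) \<bullet> g + 1/2 * ((w - a) \<bullet> (A *v (w - a)))) has_derivative
          (\<lambda>h. h \<bullet> g + 1/2 * (h \<bullet> (A *v (x - a)) + (x - a) \<bullet> (A *v h)))) (at x)"
    by (auto intro!: derivative_eq_intros bounded_linear_imp_has_derivative simp: matrix_vector_mult_diff_distrib)
  moreover have "(\<lambda>h. h \<bullet> g + 1/2 * (h \<bullet> (A *v (x - a)) + (x - a) \<bullet> (A *v h))) =
       (\<lambda>h. (g + A *v (x - a)) \<bullet> h)"
  proof
    fix h
    have "(x - a) \<bullet> (A *v h) = h \<bullet> (A *v (x - a))"
      using sym_inner[OF assms, of "x - a" h] by (simp add: inner_commute)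
    thus "h \<bullet> g + 1/2 * (h \<bullet> (A *v (x - a)) + (x - a) \<bullet> (A *v h)) = (g + A *v (x - a)) \<bullet> h"
      by (simp add: inner_add_left inner_add_right inner_commute)
  qed
  ultimately show ?thesis by simp
qed

lemma quad_tangent:
  fixes A :: "real^'n^'n"
  assumes "transpose A = A" and "\<And>v. v \<bullet> (A *v v) \<ge> 0"
  shows "c + (z - a) \<bullet> g + 1/2 * ((z - a) \<bullet> (A *v (z - a))) \<ge>
         c + (x - a) \<bullet> g + 1/2 * ((x - a) \<bullet> (A *v (x - a))) + (g + A *v (x - a)) \<bullet> (z - x)"
proof -
  define u where "u = x - a"
  define d where "d = z - x"
  have z: "z - a = u + d" unfolding u_def d_def by simp
  have s: "d \<bullet> (A *v u) = u \<bullet> (A *v d)"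
    using sym_inner[OF assms(1), of u d] by (simp add: inner_commute)
  have "(u + d) \<bullet> (A *v (u + d)) = u \<bullet> (A *v u) + 2 * ((A *v u) \<bullet> d) + d \<bullet> (A *v d)"
    using s sym_inner[OF assms(1), of u d]
    by (simp add: matrix_vector_right_distrib inner_add_left inner_add_right)
  moreover have "0 \<le> d \<bullet> (A *v d)" by (rule assms(2))
  ultimately show ?thesis unfolding z u_def[symmetric] d_def[symmetric]
    by (simp add: inner_add_left inner_add_right inner_commute)
qed

lemma fin_bound:
  fixes a b D s e1 e2 \<delta> \<rho> :: real
  assumes "\<delta> \<ge> 0" "\<rho> \<ge> 0" "b \<le> D + s" "0 \<le> b" "0 \<le> D" "0 \<le> s" "0 \<le> a"
    and "e1 \<le> \<delta>/2 * b^2 + \<rho>/6 * b^3" and "e2 \<le> \<delta>/2 * a^2 + \<rho>/6 * a^3"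
  shows "e1 + e2 \<le> 1/2 * (\<delta> * (a^2 + 2 * D^2 + 2 * s^2) + \<rho> * (a^3 + 4 * D^3 + 4 * s^3))"
proof -
  have "b^2 \<le> (D + s)^2" using assms by (intro power_mono) auto
  also have "\<dots> \<le> 2 * D^2 + 2 * s^2"
    using sum_squares_ge_zero[of "D - s" 0] by (simp add: power2_eq_square algebra_simps)
  finally have b2: "b^2 \<le> 2 * D^2 + 2 * s^2" .
  have "b^3 \<le> (D + s)^3" using assms by (intro power_mono) auto
  also have "\<dots> \<le> 4 * D^3 + 4 * s^3"
  proof -
    have "0 \<le> (D + s) * (D - s)^2" using assms by simp
    moreover have "4 * D^3 + 4 * s^3 - (D + s)^3 = 3 * ((D + s) * (D - s)^2)"
      by (simp add: power3_eq_cube power2_eq_square algebra_simps)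
    ultimately show ?thesis by linarith
  qed
  finally have b3: "b^3 \<le> 4 * D^3 + 4 * s^3" .
  have "\<delta>/2 * b^2 \<le> \<delta>/2 * (2 * D^2 + 2 * s^2)" using b2 assms by (intro mult_left_mono) auto
  moreover have "\<rho>/6 * b^3 \<le> \<rho>/2 * (4 * D^3 + 4 * s^3)"
  proof -
    have "\<rho>/6 * b^3 \<le> \<rho>/6 * (4 * D^3 + 4 * s^3)" using b3 assms by (intro mult_left_mono) auto
    also have "\<dots> \<le> \<rho>/2 * (4 * D^3 + 4 * s^3)" using assms by (intro mult_right_mono) auto
    finally show ?thesis .
  qed
  moreover have "\<rho>/6 * a^3 \<le> \<rho>/2 * a^3" using assms by (intro mult_right_mono) auto
  ultimately show ?thesis using assms(8,9) by (simp add: algebra_simps)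
qed



theorem theorem3:
  fixes K :: nat and T :: nat
    and L :: "nat \<Rightarrow> real^'n \<Rightarrow> real"
    and G :: "nat \<Rightarrow> real^'n \<Rightarrow> real^'n"
    and Hs :: "nat \<Rightarrow> real^'n \<Rightarrow> real^'n^'n"
    and \<mu> \<rho> \<delta> :: real
    and wh :: "nat \<Rightarrow> real^'n"
    and H :: "nat \<Rightarrow> real^'n^'n"
    and W :: "(real^'n) set"
    and wstar wtstar :: "real^'n"
    and Gt :: "real^'n \<Rightarrow> real^'n"
    and w :: "nat \<Rightarrow> real^'n"
  assumes K2: "K \<ge> 2"
    and grad: "\<And>k x. k \<in> {1..K} \<Longrightarrow> (L k has_derivative (\<lambda>h. G k x \<bullet> h)) (at x)"
    and hess: "\<And>k x. k \<in> {1..K} \<Longrightarrow> (G k has_derivative (\<lambda>h. Hs k x *v h)) (at x)"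
    and cvx: "\<And>k. k \<in> {1..K} \<Longrightarrow> convex_on UNIV (L k)"
    and mu_pos: "\<mu> > 0" and rho_nn: "\<rho> \<ge> 0" and delta_nn: "\<delta> \<ge> 0"
    and smooth: "\<And>k x y. k \<in> {1..K} \<Longrightarrow> norm (G k x - G k y) \<le> \<mu> * norm (x - y)"
    and hess_lip: "\<And>k x y. k \<in> {1..K} \<Longrightarrow>
                     onorm (\<lambda>v. (Hs k x - Hs k y) *v v) \<le> \<rho> * norm (x - y)"
    and H_sym: "\<And>k. k \<in> {1..K-1} \<Longrightarrow> transpose (H k) = H k"
    and H_psd: "\<And>k v. k \<in> {1..K-1} \<Longrightarrow> v \<bullet> (H k *v v) \<ge> 0"
    and H_norm: "\<And>k. k \<in> {1..K-1} \<Longrightarrow> onorm (\<lambda>v. H k *v v) \<le> \<mu>"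
    and H_approx: "\<And>k. k \<in> {1..K-1} \<Longrightarrow> onorm (\<lambda>v. (H k - Hs k (wh k)) *v v) \<le> \<delta>"
    and wstar_min: "wstar \<in> W" "\<And>v. v \<in> W \<Longrightarrow> Fobj K L wstar \<le> Fobj K L v"
    and wtstar_min: "wtstar \<in> W" "\<And>v. v \<in> W \<Longrightarrow> Ftil K L G wh H wtstar \<le> Ftil K L G wh H v"
    and grad_Ft: "\<And>x. (Ftil K L G wh H has_derivative (\<lambda>h. Gt x \<bullet> h)) (at x)"
    and w0: "w 0 = wh (K - 1)"
    and wstep: "\<And>t. w (Suc t) = w t - (1 / \<mu>) *\<^sub>R Gt (w t)"
    and wW: "\<And>t. t \<le> T \<Longrightarrow> w t \<in> W"
    and T1: "T \<ge> 1"
  shows "Fobj K L (w T) - Fobj K L wstar \<le>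
           (2 * \<mu> * (norm (w 0 - wtstar))^2) / real T
         + (1 / (2 * real K)) * (\<Sum>k=1..K-1.
              \<delta> * ((norm (wstar - wh k))^2 + 2 * (norm (w 0 - wtstar))^2 + 2 * (norm (wtstar - wh k))^2)
            + \<rho> * ((norm (wstar - wh k))^3 + 4 * (norm (w 0 - wtstar))^3 + 4 * (norm (wtstar - wh k))^3))"
proof -
  have Kpos: "real K > 0" using K2 by simp
  obtain m where m: "K = Suc m" "m \<ge> 1" using K2 by (cases K) auto
  have Km: "K - 1 = m" using m by simp
  have kK: "k \<in> {1..K}" if "k \<in> {1..K-1}" for k using that by auto
  define q where "q = (\<lambda>k x. L k (wh k) + (x - wh k) \<bullet> G k (wh k) + 1/2 * ((x - wh k) \<bullet> (H k *v (x - wh k))))"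
  define Ft where "Ft = Ftil K L G wh H"
  have Ft_eq: "Ft x = (1/real K) * ((\<Sum>k=1..K-1. q k x) + L K x)" for x
    unfolding Ft_def Ftil_def Ltil_def q_def by simp
  define ge where "ge x = (1/real K) *\<^sub>R ((\<Sum>k=1..K-1. G k (wh k) + H k *v (x - wh k)) + G K x)" for x
  have q_deriv: "(q k has_derivative (\<lambda>h. (G k (wh k) + H k *v (x - wh k)) \<bullet> h)) (at x)"
    if "k \<in> {1..K-1}" for k x
    unfolding q_def using quad_deriv[OF H_sym[OF that], of "L k (wh k)" "wh k" "G k (wh k)" x] by simp
  have dFt: "(Ft has_derivative (\<lambda>h. ge x \<bullet> h)) (at x)" for x
  proof -
    have "((\<lambda>x. (1/real K) * ((\<Sum>k=1..K-1. q k x) + L K x)) has_derivative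
       (\<lambda>h. (1/real K) * ((\<Sum>k=1..K-1. (G k (wh k) + H k *v (x - wh k)) \<bullet> h) + G K x \<bullet> h))) (at x)"
      using K2 by (intro has_derivative_mult_right has_derivative_add has_derivative_sum q_deriv grad) auto
    moreover have "(\<lambda>h. (1/real K) * ((\<Sum>k=1..K-1. (G k (wh k) + H k *v (x - wh k)) \<bullet> h) + G K x \<bullet> h))
        = (\<lambda>h. ge x \<bullet> h)"
      by (rule ext) (simp add: ge_def inner_sum_left inner_add_left)
    moreover have "Ft = (\<lambda>x. (1/real K) * ((\<Sum>k=1..K-1. q k x) + L K x))" using Ft_eq by (rule ext)
    ultimately show ?thesis by simp
  qed
  have Gt_eq: "Gt x = ge x" for x
  proof -
    have "(\<lambda>h. Gt x \<bullet> h) = (\<lambda>h. ge x \<bullet> h)"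
      using has_derivative_unique[OF grad_Ft[of x]] dFt[of x] unfolding Ft_def by blast
    hence "Gt x \<bullet> (Gt x - ge x) = ge x \<bullet> (Gt x - ge x)" by metis
    hence "(Gt x - ge x) \<bullet> (Gt x - ge x) = 0" by (simp add: inner_diff_left)
    thus ?thesis by simp
  qed
  have sm: "norm (ge x - ge y) \<le> \<mu> * norm (x - y)" for x y
  proof -
    have e: "ge x - ge y = (1/real K) *\<^sub>R ((\<Sum>k=1..K-1. H k *v (x - y)) + (G K x - G K y))"
    proof -
      define Sx where "Sx = (\<Sum>k=1..K-1. G k (wh k) + H k *v (x - wh k))"
      define Sy where "Sy = (\<Sum>k=1..K-1. G k (wh k) + H k *v (y - wh k))"
      have "Sx - Sy = (\<Sum>k=1..K-1. (G k (wh k) + H k *v (x - wh k)) - (G k (wh k) + H k *v (y - wh k)))"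
        unfolding Sx_def Sy_def by (rule sum_subtractf[symmetric])
      also have "\<dots> = (\<Sum>k=1..K-1. H k *v (x - y))"
        by (rule sum.cong) (simp_all add: matrix_vector_mult_diff_distrib)
      finally have d: "Sx - Sy = (\<Sum>k=1..K-1. H k *v (x - y))" .
      have "ge x - ge y = (1/real K) *\<^sub>R ((Sx + G K x) - (Sy + G K y))"
        unfolding ge_def Sx_def Sy_def by (simp add: scaleR_diff_right)
      also have "(Sx + G K x) - (Sy + G K y) = (Sx - Sy) + (G K x - G K y)" by (simp add: algebra_simps)
      finally show ?thesis unfolding d .
    qed
    have "norm ((\<Sum>k=1..K-1. H k *v (x - y)) + (G K x - G K y))
        \<le> (\<Sum>k=1..K-1. norm (H k *v (x - y))) + norm (G K x - G K y)"
      by (rule order_trans[OF norm_triangle_ineq add_mono[OF norm_sum order_refl]])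
    also have "\<dots> \<le> (\<Sum>k=1..K-1. \<mu> * norm (x - y)) + \<mu> * norm (x - y)"
    proof (intro add_mono sum_mono)
      fix k assume k: "k \<in> {1..K-1}"
      have "norm (H k *v (x - y)) \<le> onorm (\<lambda>v. H k *v v) * norm (x - y)" by (rule onorm) simp
      also have "\<dots> \<le> \<mu> * norm (x - y)" using H_norm[OF k] by (intro mult_right_mono) auto
      finally show "norm (H k *v (x - y)) \<le> \<mu> * norm (x - y)" .
    next
      show "norm (G K x - G K y) \<le> \<mu> * norm (x - y)" using smooth[of K] K2 by simp
    qed
    also have "\<dots> = real K * (\<mu> * norm (x - y))" using m by (simp add: algebra_simps)
    finally have "norm ((\<Sum>k=1..K-1. H k *v (x - y)) + (G K x - G K y)) \<le> real K * (\<mu> * norm (x - y))" .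
    hence "(1/real K) * norm ((\<Sum>k=1..K-1. H k *v (x - y)) + (G K x - G K y)) \<le> (1/real K) * (real K * (\<mu> * norm (x - y)))"
      using Kpos by (intro mult_left_mono) auto
    thus ?thesis unfolding e using Kpos by simp
  qed
  have tan: "Ft z \<ge> Ft x + ge x \<bullet> (z - x)" for x z
  proof -
    have s1: "(\<Sum>k=1..K-1. q k z) \<ge> (\<Sum>k=1..K-1. q k x + (G k (wh k) + H k *v (x - wh k)) \<bullet> (z - x))"
    proof (intro sum_mono)
      fix k assume k: "k \<in> {1..K-1}"
      show "q k x + (G k (wh k) + H k *v (x - wh k)) \<bullet> (z - x) \<le> q k z"
        unfolding q_def using quad_tangent[OF H_sym[OF k] H_psd[OF k], where c="L k (wh k)" and z=z and a="wh k" and g="G k (wh k)" and x=x]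
        by simp
    qed
    have s2: "L K z \<ge> L K x + G K x \<bullet> (z - x)"
    proof -
      have kK0: "K \<in> {1..K}" using K2 by simp
      show ?thesis using convex_tangent[OF cvx[OF kK0] grad[OF kK0], where z=z] by simp
    qed
    have ga: "ge x \<bullet> (z - x) = (1/real K) * ((\<Sum>k=1..K-1. (G k (wh k) + H k *v (x - wh k)) \<bullet> (z - x)) + G K x \<bullet> (z - x))"
      by (simp add: ge_def inner_sum_left inner_add_left)
    have sd: "(\<Sum>k=1..K-1. q k x + (G k (wh k) + H k *v (x - wh k)) \<bullet> (z - x))
       = (\<Sum>k=1..K-1. q k x) + (\<Sum>k=1..K-1. (G k (wh k) + H k *v (x - wh k)) \<bullet> (z - x))"
      by (rule sum.distrib)
    have "Ft x + ge x \<bullet> (z - x) = (1/real K) * ((\<Sum>k=1..K-1. q k x) + L K x)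
        + (1/real K) * ((\<Sum>k=1..K-1. (G k (wh k) + H k *v (x - wh k)) \<bullet> (z - x)) + G K x \<bullet> (z - x))"
      by (simp only: Ft_eq ga)
    also have "\<dots> = (1/real K) * (((\<Sum>k=1..K-1. q k x) + (\<Sum>k=1..K-1. (G k (wh k) + H k *v (x - wh k)) \<bullet> (z - x))) + (L K x + G K x \<bullet> (z - x)))"
      by (rule aux_lin)
    also have "\<dots> = (1/real K) * ((\<Sum>k=1..K-1. q k x + (G k (wh k) + H k *v (x - wh k)) \<bullet> (z - x)) + (L K x + G K x \<bullet> (z - x)))"
      by (simp only: sd)
    also have "\<dots> \<le> (1/real K) * ((\<Sum>k=1..K-1. q k z) + L K z)"
      using s1 s2 Kpos by (intro mult_left_mono) auto
    finally show ?thesis unfolding Ft_eq .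
  qed
  have wstep': "w (Suc t) = w t - (1 / \<mu>) *\<^sub>R ge (w t)" for t using wstep Gt_eq by simp
  note gs = gd_step[OF dFt sm mu_pos tan wstep']
  define D where "D = norm (w 0 - wtstar)"
  have conv: "real n * (Ft (w n) - Ft wtstar) + \<mu> / 2 * norm (w n - wtstar)^2 \<le> \<mu> / 2 * D^2" for n
  proof (induction n)
    case 0 then show ?case unfolding D_def by simp
  next
    case (Suc n)
    have a: "Ft (w (Suc n)) \<le> Ft (w n)" by (rule gs(1))
    have b: "Ft (w (Suc n)) - Ft wtstar \<le> \<mu> / 2 * (norm (w n - wtstar)^2 - norm (w (Suc n) - wtstar)^2)"
      by (rule gs(2))
    have "real n * (Ft (w (Suc n)) - Ft wtstar) \<le> real n * (Ft (w n) - Ft wtstar)"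
      using a by (intro mult_left_mono) auto
    then show ?case using Suc b by (simp add: algebra_simps)
  qed
  have dist: "t \<le> T \<Longrightarrow> norm (w t - wtstar) \<le> D" for t
  proof (induction t)
    case 0 then show ?case unfolding D_def by simp
  next
    case (Suc t)
    have "Ft wtstar \<le> Ft (w (Suc t))" unfolding Ft_def using wtstar_min(2)[OF wW[OF Suc.prems]] .
    hence "norm (w (Suc t) - wtstar)^2 \<le> norm (w t - wtstar)^2"
    proof -
      have "0 \<le> \<mu> / 2 * (norm (w t - wtstar)^2 - norm (w (Suc t) - wtstar)^2)"
        using gs(2)[of t wtstar] \<open>Ft wtstar \<le> Ft (w (Suc t))\<close> by linarith
      hence "0 \<le> norm (w t - wtstar)^2 - norm (w (Suc t) - wtstar)^2"
        using mu_pos by (simp add: zero_le_mult_iff)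
      thus ?thesis by linarith
    qed
    hence "norm (w (Suc t) - wtstar) \<le> norm (w t - wtstar)" by (rule power2_le_imp_le) simp
    then show ?case using Suc by simp
  qed
  have E: "\<bar>L k x - q k x\<bar> \<le> \<delta>/2 * norm (x - wh k)^2 + \<rho>/6 * norm (x - wh k)^3"
    if k: "k \<in> {1..K-1}" for k x
  proof -
    define v where "v = x - wh k"
    have t3: "\<bar>L k (wh k + v) - L k (wh k) - G k (wh k) \<bullet> v - 1/2 * (v \<bullet> (Hs k (wh k) *v v))\<bar> \<le> \<rho> / 6 * norm v ^ 3"
      by (rule taylor3) (use grad hess hess_lip kK[OF k] in auto)
    have "\<bar>v \<bullet> ((H k - Hs k (wh k)) *v v)\<bar> \<le> onorm (\<lambda>u. (H k - Hs k (wh k)) *v u) * (norm v)^2"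
      by (rule quad_bound)
    also have "\<dots> \<le> \<delta> * (norm v)^2" using H_approx[OF k] by (intro mult_right_mono) auto
    finally have hq: "\<bar>v \<bullet> (H k *v v) - v \<bullet> (Hs k (wh k) *v v)\<bar> \<le> \<delta> * (norm v)^2"
      by (simp add: matrix_vector_mult_diff_rdistrib inner_diff_right)
    have "L k x - q k x = (L k (wh k + v) - L k (wh k) - G k (wh k) \<bullet> v - 1/2 * (v \<bullet> (Hs k (wh k) *v v)))
       - 1/2 * (v \<bullet> (H k *v v) - v \<bullet> (Hs k (wh k) *v v))"
      unfolding q_def v_def by (simp add: inner_commute algebra_simps)
    hence "\<bar>L k x - q k x\<bar> \<le> \<rho> / 6 * norm v ^ 3 + 1/2 * (\<delta> * (norm v)^2)" using t3 hq by (rule aux_abs)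
    thus ?thesis unfolding v_def by simp
  qed
  have Fobj_eq: "Fobj K L x = Ft x + (1/real K) * (\<Sum>k=1..K-1. L k x - q k x)" for x
  proof -
    have "(\<Sum>k=1..K. L k x) = (\<Sum>k=1..K-1. L k x) + L K x" using m by simp
    thus ?thesis unfolding Fobj_def Ft_eq by (simp add: sum_subtractf algebra_simps)
  qed
  have T0: "real T > 0" using T1 by simp
  have c1: "Ft (w T) - Ft wtstar \<le> (2 * \<mu> * D^2) / real T"
  proof -
    have "0 \<le> \<mu> / 2 * norm (w T - wtstar)^2" using mu_pos by simp
    hence "real T * (Ft (w T) - Ft wtstar) \<le> \<mu> / 2 * D^2" using conv[of T] by linarith
    also have "\<dots> \<le> 2 * \<mu> * D^2" using mu_pos by simp
    finally show ?thesis using T0 by (simp add: field_simps)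
  qed
  have c2: "Ft wtstar \<le> Ft wstar" unfolding Ft_def using wtstar_min(2)[OF wstar_min(1)] .
  define B where "B k = \<delta> * ((norm (wstar - wh k))^2 + 2 * D^2 + 2 * (norm (wtstar - wh k))^2)
            + \<rho> * ((norm (wstar - wh k))^3 + 4 * D^3 + 4 * (norm (wtstar - wh k))^3)" for k
  have c3: "(L k (w T) - q k (w T)) - (L k wstar - q k wstar) \<le> 1/2 * B k" if k: "k \<in> {1..K-1}" for k
  proof -
    have nb: "norm (w T - wh k) \<le> D + norm (wtstar - wh k)"
    proof -
      have "norm (w T - wh k) \<le> norm (w T - wtstar) + norm (wtstar - wh k)"
        using norm_triangle_ineq[of "w T - wtstar" "wtstar - wh k"] by simp
      thus ?thesis using dist[of T] by simp
    qed
    have e2: "-(L k wstar - q k wstar) \<le> \<delta>/2 * norm (wstar - wh k)^2 + \<rho>/6 * norm (wstar - wh k)^3"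
      using E[OF k, of wstar] by linarith
    have e1: "L k (w T) - q k (w T) \<le> \<delta>/2 * norm (w T - wh k)^2 + \<rho>/6 * norm (w T - wh k)^3"
      using E[OF k, of "w T"] by linarith
    show ?thesis unfolding B_def
      using fin_bound[OF delta_nn rho_nn nb _ _ _ _ e1 e2] unfolding D_def by simp
  qed
  have "Fobj K L (w T) - Fobj K L wstar
      = (Ft (w T) - Ft wstar) + (1/real K) * (\<Sum>k=1..K-1. (L k (w T) - q k (w T)) - (L k wstar - q k wstar))"
  proof -
    have s: "(\<Sum>k=1..K-1. (L k (w T) - q k (w T)) - (L k wstar - q k wstar))
       = (\<Sum>k=1..K-1. L k (w T) - q k (w T)) - (\<Sum>k=1..K-1. L k wstar - q k wstar)"
      by (rule sum_subtractf)
    show ?thesis unfolding Fobj_eq s right_diff_distrib by linarith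
  qed
  also have "\<dots> \<le> (2 * \<mu> * D^2) / real T + (1/real K) * (\<Sum>k=1..K-1. 1/2 * B k)"
  proof (rule add_mono)
    show "Ft (w T) - Ft wstar \<le> 2 * \<mu> * D\<^sup>2 / real T" using c1 c2 by linarith
    have "(\<Sum>k=1..K-1. (L k (w T) - q k (w T)) - (L k wstar - q k wstar)) \<le> (\<Sum>k=1..K-1. 1/2 * B k)"
      by (rule sum_mono) (rule c3)
    thus "(1/real K) * (\<Sum>k=1..K-1. (L k (w T) - q k (w T)) - (L k wstar - q k wstar))
        \<le> (1/real K) * (\<Sum>k=1..K-1. 1/2 * B k)" using Kpos by (intro mult_left_mono) auto
  qed
  also have "\<dots> = (2 * \<mu> * D^2) / real T + (1 / (2 * real K)) * (\<Sum>k=1..K-1. B k)"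
    by (simp add: sum_divide_distrib[symmetric])
  finally show ?thesis unfolding B_def D_def .
qed


end
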